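(* Let $\mathfrak p\in\mathcal F^*$ and let $N$ be an $R$-module with $\mathfrak pN=0$. Then: (a) $N$ is simple-$\mathcal F$-torsion-free if and only if $N$ is simple-torsion-free as an $R/\mathfrak p$-module; (b) $N$ is simple-$\mathcal F$-divisible if and only if $N$ is simple-divisible as an $R/\mathfrak p$-module.
   Context: Throughout, $R$ is a commutative Noetherian local ring and $\mathcal F$ is a Gabriel topology on $R$: a nonempty set of ideals of $R$ such that (1) if $\mathfrak a\in\mathcal F$ and $\mathfrak a\subseteq\mathfrak b$ then $\mathfrak b\in\mathcal F$; (2) if $\mathfrak a,\mathfrak b\in\mathcal F$ then $\mathfrak a\cap\mathfrak b\in\mathcal F$; (3) if $\mathfrak b$ is an ideal and there is $\mathfrak a\in\mathcal F$ with $(\mathfrak b:r)\in\mathcal F$ for all $r\in\mathfrak a$, then $\mathfrak b\in\mathcal F$. For an $R$-module $X$ and ideal $\mathfrak a$, $X[\mathfrak a]=\{x\in X:\mathfrak a x=0\}$. $X$ is $\mathcal F$-torsion-free if $X[\mathfrak a]=0$ for all $\mathfrak a\in\mathcal F$, and $\mathcal F$-divisible if $\mathfrak aX=X$ for all $\mathfrak a\in\mathcal F$. $M$ is simple-$\mathcal F$-torsion-free if $M\neq0$, $M$ is $\mathcal F$-torsion-free, and for every submodule $0\neq U\subsetneq M$, $M/U$ is not $\mathcal F$-torsion-free; $N$ is simple-$\mathcal F$-divisible if $N\ne0$, $N$ is $\mathcal F$-divisible, and no submodule $0\neq V\subsetneq N$ is $\mathcal F$-divisible. $\mathcal F^*$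 denotes the set of maximal elements of $\mathrm{Spec}(R)\setminus\mathcal F$. Over a domain $D$: a module is torsion-free if no nonzero element of $D$ kills a nonzero element, divisible if $dX=X$ for all $0\neq d\in D$; simple-torsion-free means nonzero, torsion-free, and every quotient $M/U$ with $0\ne U\subsetneq M$ is not torsion-free; simple-divisible means nonzero, divisible, and no submodule $0\ne V\subsetneq N$ is divisible. *)

theory Defs
  imports "HOL-Algebra.Algebra"
begin

definition local_ring :: "('a, 'c) ring_scheme \<Rightarrow> bool" where
  "local_ring R \<longleftrightarrow> cring R \<and> (\<exists>!m. maximalideal m R)"

definition colon_ideal :: "('a, 'c) ring_scheme \<Rightarrow> 'a set \<Rightarrow> 'a \<Rightarrow> 'a set" where
  "colon_ideal R b r = {s \<in> carrier R. s \<otimes>\<^bsub>R\<^esub> r \<in> b}"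

definition gabriel_topology :: "('a, 'c) ring_scheme \<Rightarrow> 'a set set \<Rightarrow> bool" where
  "gabriel_topology R F \<longleftrightarrow>
     F \<noteq> {} \<and> (\<forall>a\<in>F. ideal a R) \<and>
     (\<forall>a b. a \<in> F \<and> ideal b R \<and> a \<subseteq> b \<longrightarrow> b \<in> F) \<and>
     (\<forall>a\<in>F. \<forall>b\<in>F. a \<inter> b \<in> F) \<and>
     (\<forall>b. ideal b R \<and> (\<exists>a\<in>F. \<forall>r\<in>a. colon_ideal R b r \<in> F) \<longrightarrow> b \<in> F)"

definition F_star :: "('a, 'c) ring_scheme \<Rightarrow> 'a set set \<Rightarrow> 'a set set" where
  "F_star R F = {p. primeideal p R \<and> p \<notin> F \<and>
      (\<forall>q. primeideal q R \<and> q \<notin> F \<and> p \<subseteq> q \<longrightarrow> q = p)}"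

text \<open>a W: the set of finite sums of elements r x with r in a and x in W,
  i.e. the least set containing 0 and all such r x and closed under addition.\<close>
definition ideal_times :: "('s, 'b) module \<Rightarrow> 's set \<Rightarrow> 'b set \<Rightarrow> 'b set" where
  "ideal_times M a W = Inter {Y. \<zero>\<^bsub>M\<^esub> \<in> Y \<and>
      (\<forall>r\<in>a. \<forall>x\<in>W. r \<odot>\<^bsub>M\<^esub> x \<in> Y) \<and>
      (\<forall>y\<in>Y. \<forall>z\<in>Y. y \<oplus>\<^bsub>M\<^esub> z \<in> Y)}"

definition ann_part :: "('s, 'b) module \<Rightarrow> 's set \<Rightarrow> 'b set \<Rightarrow> 'b set" where
  "ann_part M a W = {x \<in> W. \<forall>r\<in>a. r \<odot>\<^bsub>M\<^esub> x = \<zero>\<^bsub>M\<^esub>}"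

definition F_torsion_free :: "'s set set \<Rightarrow> ('s, 'b) module \<Rightarrow> bool" where
  "F_torsion_free F M \<longleftrightarrow> (\<forall>a\<in>F. ann_part M a (carrier M) = {\<zero>\<^bsub>M\<^esub>})"

text \<open>The quotient M/U is F-torsion-free: (M/U)[a] = 0 for all a in F, i.e.
  whenever a x is contained in U then x lies in U.\<close>
definition quot_F_torsion_free :: "'s set set \<Rightarrow> ('s, 'b) module \<Rightarrow> 'b set \<Rightarrow> bool" where
  "quot_F_torsion_free F M U \<longleftrightarrow>
     (\<forall>a\<in>F. \<forall>x\<in>carrier M. (\<forall>r\<in>a. r \<odot>\<^bsub>M\<^esub> x \<in> U) \<longrightarrow> x \<in> U)"

definition simple_F_torsion_free ::
    "('s, 'c) ring_scheme \<Rightarrow> 's set set \<Rightarrow> ('s, 'b) module \<Rightarrow> bool" where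
  "simple_F_torsion_free R F M \<longleftrightarrow>
     carrier M \<noteq> {\<zero>\<^bsub>M\<^esub>} \<and> F_torsion_free F M \<and>
     (\<forall>U. submodule U R M \<and> U \<noteq> {\<zero>\<^bsub>M\<^esub>} \<and> U \<subset> carrier M \<longrightarrow>
          \<not> quot_F_torsion_free F M U)"

definition F_divisible :: "'s set set \<Rightarrow> ('s, 'b) module \<Rightarrow> 'b set \<Rightarrow> bool" where
  "F_divisible F M W \<longleftrightarrow> (\<forall>a\<in>F. ideal_times M a W = W)"

definition simple_F_divisible ::
    "('s, 'c) ring_scheme \<Rightarrow> 's set set \<Rightarrow> ('s, 'b) module \<Rightarrow> bool" where
  "simple_F_divisible R F M \<longleftrightarrow>
     carrier M \<noteq> {\<zero>\<^bsub>M\<^esub>} \<and> F_divisible F M (carrier M) \<and>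
     (\<forall>V. submodule V R M \<and> V \<noteq> {\<zero>\<^bsub>M\<^esub>} \<and> V \<subset> carrier M \<longrightarrow>
          \<not> F_divisible F M V)"

definition torsion_free :: "('s, 'c) ring_scheme \<Rightarrow> ('s, 'b) module \<Rightarrow> bool" where
  "torsion_free D M \<longleftrightarrow>
     (\<forall>d\<in>carrier D - {\<zero>\<^bsub>D\<^esub>}. \<forall>x\<in>carrier M.
        d \<odot>\<^bsub>M\<^esub> x = \<zero>\<^bsub>M\<^esub> \<longrightarrow> x = \<zero>\<^bsub>M\<^esub>)"

text \<open>The quotient M/U is torsion-free.\<close>
definition quot_torsion_free :: "('s, 'c) ring_scheme \<Rightarrow> ('s, 'b) module \<Rightarrow> 'b set \<Rightarrow> bool" where
  "quot_torsion_free D M U \<longleftrightarrow>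
     (\<forall>d\<in>carrier D - {\<zero>\<^bsub>D\<^esub>}. \<forall>x\<in>carrier M. d \<odot>\<^bsub>M\<^esub> x \<in> U \<longrightarrow> x \<in> U)"

definition simple_torsion_free :: "('s, 'c) ring_scheme \<Rightarrow> ('s, 'b) module \<Rightarrow> bool" where
  "simple_torsion_free D M \<longleftrightarrow>
     carrier M \<noteq> {\<zero>\<^bsub>M\<^esub>} \<and> torsion_free D M \<and>
     (\<forall>U. submodule U D M \<and> U \<noteq> {\<zero>\<^bsub>M\<^esub>} \<and> U \<subset> carrier M \<longrightarrow>
          \<not> quot_torsion_free D M U)"

definition divisible :: "('s, 'c) ring_scheme \<Rightarrow> ('s, 'b) module \<Rightarrow> 'b set \<Rightarrow> bool" where
  "divisible D M W \<longleftrightarrow> (\<forall>d\<in>carrier D - {\<zero>\<^bsub>D\<^esub>}. (\<lambda>x. d \<odot>\<^bsub>M\<^esub> x) ` W = W)"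

definition simple_divisible :: "('s, 'c) ring_scheme \<Rightarrow> ('s, 'b) module \<Rightarrow> bool" where
  "simple_divisible D M \<longleftrightarrow>
     carrier M \<noteq> {\<zero>\<^bsub>M\<^esub>} \<and> divisible D M (carrier M) \<and>
     (\<forall>V. submodule V D M \<and> V \<noteq> {\<zero>\<^bsub>M\<^esub>} \<and> V \<subset> carrier M \<longrightarrow>
          \<not> divisible D M V)"

text \<open>Same underlying abelian group; the coset W = p + r acts as r does
  (well defined when p N = 0).\<close>
definition quot_module :: "('a, 'b) module \<Rightarrow> ('a set, 'b) module" where
  "quot_module N =
     \<lparr>carrier = carrier N, monoid.mult = monoid.mult N, one = one N, ring.zero = ring.zero N, ring.add = ring.add N,
      smult = (\<lambda>W x. SOME y. \<exists>r\<in>W. y = r \<odot>\<^bsub>N\<^esub> x)\<rparr>"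

end

theory Submission
  imports Defs
begin


lemma (in cring) colon_ideal_ideal:
  assumes m: "ideal m R" and x: "x \<in> carrier R"
  shows "ideal (colon_ideal R m x) R"
proof (rule idealI)
  interpret m: ideal m R by fact
  show "ring R" by (rule ring_axioms)
  show "subgroup (colon_ideal R m x) (add_monoid R)"
  proof (rule add.subgroupI)
    show "colon_ideal R m x \<subseteq> carrier R" by (auto simp: colon_ideal_def)
    show "colon_ideal R m x \<noteq> {}" using x by (auto simp: colon_ideal_def intro!: exI[of _ \<zero>])
    fix a assume "a \<in> colon_ideal R m x"
    then show "\<ominus> a \<in> colon_ideal R m x"
      using x by (auto simp: colon_ideal_def l_minus)
  next
    fix a b assume "a \<in> colon_ideal R m x" "b \<in> colon_ideal R m x"
    then show "a \<oplus> b \<in> colon_ideal R m x"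
      using x by (auto simp: colon_ideal_def l_distr)
  qed
  fix a y assume "a \<in> colon_ideal R m x" "y \<in> carrier R"
  then show "y \<otimes> a \<in> colon_ideal R m x" "a \<otimes> y \<in> colon_ideal R m x"
    using x by (auto simp: colon_ideal_def m_assoc m.I_l_closed)
      (metis m.I_r_closed m_assoc m_comm m_closed)
qed

lemma (in cring) carrier_in_F:
  assumes gab: "gabriel_topology R F"
  shows "carrier R \<in> F"
proof -
  from gab obtain a where a: "a \<in> F" "ideal a R" unfolding gabriel_topology_def by blast
  then have "a \<subseteq> carrier R" by (simp add: ideal.Icarr subsetI)
  then show ?thesis using gab a oneideal unfolding gabriel_topology_def by blast
qed

lemma (in cring) exists_prime_not_in_F:
  assumes noeth: "noetherian_ring R" and gab: "gabriel_topology R F"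
    and b: "ideal b R" and bF: "b \<notin> F"
  shows "\<exists>q. primeideal q R \<and> q \<notin> F \<and> b \<subseteq> q"
proof -
  interpret noetherian_ring R by fact
  define AA where "AA = {I. ideal I R \<and> b \<subseteq> I \<and> I \<notin> F}"
  have "\<exists>M\<in>AA. \<forall>Y\<in>AA. M \<subseteq> Y \<longrightarrow> Y = M"
  proof (rule subset_Zorn_nonempty)
    show "AA \<noteq> {}" using b bF unfolding AA_def by blast
    fix C assume C: "C \<noteq> {}" "subset.chain AA C"
    then have "subset.chain {I. ideal I R} C"
      unfolding AA_def pred_on.chain_def by blast
    then have "\<Union>C \<in> C" using ideal_chain_is_trivial C(1) by blast
    then show "\<Union>C \<in> AA" using C(2) unfolding pred_on.chain_def by blast
  qed
  then obtain M where MA: "M \<in> AA" and Mmax: "\<And>Y. Y \<in> AA \<Longrightarrow> M \<subseteq> Y \<Longrightarrow> Y = M" by blast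
  have Mi: "ideal M R" and bM: "b \<subseteq> M" and MF: "M \<notin> F" using MA unfolding AA_def by auto
  interpret Mi: ideal M R by fact
  have upF: "\<And>Y. ideal Y R \<Longrightarrow> M \<subseteq> Y \<Longrightarrow> Y \<noteq> M \<Longrightarrow> Y \<in> F"
    using Mmax bM unfolding AA_def by blast
  have "primeideal M R"
  proof (rule primeidealI[OF Mi is_cring])
    show "carrier R \<noteq> M" using carrier_in_F[OF gab] MF by blast
    fix x y assume x: "x \<in> carrier R" and y: "y \<in> carrier R" and xy: "x \<otimes> y \<in> M"
    show "x \<in> M \<or> y \<in> M"
    proof (rule ccontr)
      assume "\<not> (x \<in> M \<or> y \<in> M)"
      then have xM: "x \<notin> M" and yM: "y \<notin> M" by auto
      define J1 where "J1 = set_add R M (PIdl x)"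
      have J1i: "ideal J1 R" unfolding J1_def by (rule add_ideals[OF Mi cgenideal_ideal[OF x]])
      have J1mem: "\<And>r. r \<in> J1 \<Longrightarrow> \<exists>a\<in>M. \<exists>s\<in>carrier R. r = a \<oplus> s \<otimes> x"
        unfolding J1_def set_add_def' cgenideal_def by blast
      have MJ1: "M \<subseteq> J1"
      proof
        fix a assume "a \<in> M"
        then have "a = a \<oplus> \<zero> \<otimes> x" using x by simp
        then show "a \<in> J1" using \<open>a \<in> M\<close> unfolding J1_def set_add_def' cgenideal_def by blast
      qed
      have "x = \<zero> \<oplus> \<one> \<otimes> x" using x by simp
      then have "x \<in> J1" unfolding J1_def set_add_def' cgenideal_def using Mi.zero_closed by blast
      then have J1F: "J1 \<in> F" using upF[OF J1i MJ1] xM by blast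
      define J2 where "J2 = colon_ideal R M x"
      have J2i: "ideal J2 R" unfolding J2_def by (rule colon_ideal_ideal[OF Mi x])
      have MJ2: "M \<subseteq> J2" unfolding J2_def colon_ideal_def using x Mi.I_r_closed Mi.Icarr by blast
      have "y \<in> J2" unfolding J2_def colon_ideal_def using x y xy m_comm by auto
      then have J2F: "J2 \<in> F" using upF[OF J2i MJ2] yM by blast
      have "\<forall>r\<in>J1. colon_ideal R M r \<in> F"
      proof
        fix r assume "r \<in> J1"
        then obtain a s where a: "a \<in> M" and s: "s \<in> carrier R" and r: "r = a \<oplus> s \<otimes> x"
          using J1mem by blast
        have rc: "r \<in> carrier R" using r a s x Mi.Icarr by blast
        have "J2 \<subseteq> colon_ideal R M r"
        proof
          fix t assume "t \<in> J2"
          then have t: "t \<in> carrier R" and tx: "t \<otimes> x \<in> M" unfolding J2_def colon_ideal_def by auto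
          have ac: "a \<in> carrier R" using a Mi.Icarr by blast
          have "t \<otimes> r = t \<otimes> a \<oplus> s \<otimes> (t \<otimes> x)"
            using t ac s x r by (simp add: r_distr m_lcomm)
          also have "\<dots> \<in> M" using Mi.I_l_closed Mi.a_closed a tx t s by simp
          finally have "t \<otimes> r \<in> M" .
          then show "t \<in> colon_ideal R M r" using t unfolding colon_ideal_def by auto
        qed
        then show "colon_ideal R M r \<in> F"
          using gab J2F colon_ideal_ideal[OF Mi rc] unfolding gabriel_topology_def by blast
      qed
      then have "M \<in> F" using gab Mi J1F unfolding gabriel_topology_def by blast
      then show False using MF by blast
    qed
  qed
  then show ?thesis using MF bM by blast
qed



lemma Q_smult:
  fixes R :: "'a ring" and N :: "('a,'b) module"
  assumes N: "module R N" and p: "ideal p R"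
    and pN: "\<forall>q\<in>p. \<forall>x\<in>carrier N. q \<odot>\<^bsub>N\<^esub> x = \<zero>\<^bsub>N\<^esub>"
    and r: "r \<in> carrier R" and x: "x \<in> carrier N"
  shows "(p +>\<^bsub>R\<^esub> r) \<odot>\<^bsub>quot_module N\<^esub> x = r \<odot>\<^bsub>N\<^esub> x"
proof -
  interpret module R N by fact
  interpret p: ideal p R by fact
  have all: "\<And>r'. r' \<in> p +>\<^bsub>R\<^esub> r \<Longrightarrow> r' \<odot>\<^bsub>N\<^esub> x = r \<odot>\<^bsub>N\<^esub> x"
  proof -
    fix r' assume "r' \<in> p +>\<^bsub>R\<^esub> r"
    then obtain q where q: "q \<in> p" and r': "r' = q \<oplus>\<^bsub>R\<^esub> r" unfolding a_r_coset_def' by blast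
    have qc: "q \<in> carrier R" using q p.Icarr by blast
    have "r' \<odot>\<^bsub>N\<^esub> x = q \<odot>\<^bsub>N\<^esub> x \<oplus>\<^bsub>N\<^esub> r \<odot>\<^bsub>N\<^esub> x"
      unfolding r' by (rule smult_l_distr[OF qc r x])
    also have "q \<odot>\<^bsub>N\<^esub> x = \<zero>\<^bsub>N\<^esub>" using pN q x by blast
    also have "\<zero>\<^bsub>N\<^esub> \<oplus>\<^bsub>N\<^esub> r \<odot>\<^bsub>N\<^esub> x = r \<odot>\<^bsub>N\<^esub> x" using r x by (intro M.l_zero smult_closed)
    finally show "r' \<odot>\<^bsub>N\<^esub> x = r \<odot>\<^bsub>N\<^esub> x" .
  qed
  have rin: "r \<in> p +>\<^bsub>R\<^esub> r" using p.a_rcos_self r by blast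
  have sm: "smult (quot_module N) = (\<lambda>W x. SOME y. \<exists>r\<in>W. y = r \<odot>\<^bsub>N\<^esub> x)"
    unfolding quot_module_def by (rule module.select_convs(1))
  show ?thesis unfolding sm
  proof (rule some_equality)
    show "\<exists>r'\<in>p +>\<^bsub>R\<^esub> r. r \<odot>\<^bsub>N\<^esub> x = r' \<odot>\<^bsub>N\<^esub> x" using rin by blast
    fix y assume "\<exists>r'\<in>p +>\<^bsub>R\<^esub> r. y = r' \<odot>\<^bsub>N\<^esub> x"
    then show "y = r \<odot>\<^bsub>N\<^esub> x" using all by blast
  qed
qed

lemma Quot_nonzero:
  fixes R :: "'a ring"
  assumes "cring R" "ideal p R"
  shows "(\<forall>W\<in>carrier (R Quot p) - {\<zero>\<^bsub>R Quot p\<^esub>}. P W) \<longleftrightarrow> (\<forall>r\<in>carrier R - p. P (p +>\<^bsub>R\<^esub> r))"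
proof -
  interpret cring R by fact
  interpret p: ideal p R by fact
  have eq: "\<And>r. r \<in> carrier R \<Longrightarrow> p +>\<^bsub>R\<^esub> r = p \<longleftrightarrow> r \<in> p"
    using p.a_rcos_self p.a_rcos_const by metis
  have c: "carrier (R Quot p) = a_rcosets\<^bsub>R\<^esub> p" and z: "\<zero>\<^bsub>R Quot p\<^esub> = p"
    by (simp_all add: FactRing_def)
  show ?thesis
  proof
    assume H: "\<forall>W\<in>carrier (R Quot p) - {\<zero>\<^bsub>R Quot p\<^esub>}. P W"
    show "\<forall>r\<in>carrier R - p. P (p +>\<^bsub>R\<^esub> r)"
    proof
      fix r assume r: "r \<in> carrier R - p"
      have "p +>\<^bsub>R\<^esub> r \<in> carrier (R Quot p)" unfolding c using r p.Icarr
        by (intro a_rcosetsI) auto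
      moreover have "p +>\<^bsub>R\<^esub> r \<noteq> p" using eq r by blast
      ultimately show "P (p +>\<^bsub>R\<^esub> r)" using H z by blast
    qed
  next
    assume H: "\<forall>r\<in>carrier R - p. P (p +>\<^bsub>R\<^esub> r)"
    show "\<forall>W\<in>carrier (R Quot p) - {\<zero>\<^bsub>R Quot p\<^esub>}. P W"
    proof
      fix W assume W: "W \<in> carrier (R Quot p) - {\<zero>\<^bsub>R Quot p\<^esub>}"
      then obtain r where r: "r \<in> carrier R" "W = p +>\<^bsub>R\<^esub> r"
        unfolding c A_RCOSETS_def' by blast
      have "r \<notin> p" using W r eq z by blast
      then show "P W" using H r by blast
    qed
  qed
qed

lemma ideal_times_mem:
  "r \<in> a \<Longrightarrow> x \<in> W \<Longrightarrow> r \<odot>\<^bsub>M\<^esub> x \<in> ideal_times M a W"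
  unfolding ideal_times_def by blast

lemma ideal_times_least:
  assumes "\<zero>\<^bsub>M\<^esub> \<in> Y" "\<And>r x. r \<in> a \<Longrightarrow> x \<in> W \<Longrightarrow> r \<odot>\<^bsub>M\<^esub> x \<in> Y"
    "\<And>y z. y \<in> Y \<Longrightarrow> z \<in> Y \<Longrightarrow> y \<oplus>\<^bsub>M\<^esub> z \<in> Y"
  shows "ideal_times M a W \<subseteq> Y"
  unfolding ideal_times_def
proof (rule Inter_lower)
  show "Y \<in> {Y. \<zero>\<^bsub>M\<^esub> \<in> Y \<and> (\<forall>r\<in>a. \<forall>x\<in>W. r \<odot>\<^bsub>M\<^esub> x \<in> Y) \<and> (\<forall>y\<in>Y. \<forall>z\<in>Y. y \<oplus>\<^bsub>M\<^esub> z \<in> Y)}"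
    using assms by blast
qed

lemma pN_of:
  assumes "ideal_times N p (carrier N) = {\<zero>\<^bsub>N\<^esub>}"
  shows "\<forall>q\<in>p. \<forall>x\<in>carrier N. q \<odot>\<^bsub>N\<^esub> x = \<zero>\<^bsub>N\<^esub>"
proof (intro ballI)
  fix q x assume "q \<in> p" "x \<in> carrier N"
  then have "q \<odot>\<^bsub>N\<^esub> x \<in> ideal_times N p (carrier N)" by (rule ideal_times_mem)
  then show "q \<odot>\<^bsub>N\<^esub> x = \<zero>\<^bsub>N\<^esub>" using assms by simp
qed

lemma Fstar_K1:
  assumes gab: "gabriel_topology R F" and pF: "p \<in> F_star R F" and a: "a \<in> F"
  shows "\<exists>d\<in>a. d \<notin> p"
proof (rule ccontr)
  assume "\<not> ?thesis"
  then have "a \<subseteq> p" by blast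
  moreover have "ideal p R" using pF unfolding F_star_def by (auto dest: primeideal.axioms(1))
  ultimately have "p \<in> F" using gab a unfolding gabriel_topology_def by blast
  then show False using pF unfolding F_star_def by blast
qed

lemma Fstar_K2:
  fixes R :: "'a ring"
  assumes cr: "cring R" and noeth: "noetherian_ring R" and gab: "gabriel_topology R F"
    and pF: "p \<in> F_star R F" and d: "d \<in> carrier R" "d \<notin> p"
  shows "set_add R p (PIdl\<^bsub>R\<^esub> d) \<in> F"
proof (rule ccontr)
  interpret cring R by fact
  have pi: "ideal p R" using pF unfolding F_star_def by (auto dest: primeideal.axioms(1))
  interpret p: ideal p R by fact
  define J where "J = set_add R p (PIdl\<^bsub>R\<^esub> d)"
  assume JF0: "set_add R p (PIdl\<^bsub>R\<^esub> d) \<notin> F"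
  then have JF: "J \<notin> F" unfolding J_def .
  have Ji: "ideal J R" unfolding J_def by (rule add_ideals[OF pi cgenideal_ideal[OF d(1)]])
  obtain q where q: "primeideal q R" "q \<notin> F" "J \<subseteq> q"
    using exists_prime_not_in_F[OF noeth gab Ji JF] by blast
  have pJ: "p \<subseteq> J"
  proof
    fix a assume "a \<in> p"
    then have "a = a \<oplus>\<^bsub>R\<^esub> \<zero>\<^bsub>R\<^esub> \<otimes>\<^bsub>R\<^esub> d" using d by simp
    then show "a \<in> J" using \<open>a \<in> p\<close> unfolding J_def set_add_def' cgenideal_def by blast
  qed
  have "d = \<zero>\<^bsub>R\<^esub> \<oplus>\<^bsub>R\<^esub> \<one>\<^bsub>R\<^esub> \<otimes>\<^bsub>R\<^esub> d" using d by simp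
  then have dJ: "d \<in> J" unfolding J_def set_add_def' cgenideal_def using p.zero_closed by blast
  have "\<forall>q'. primeideal q' R \<and> q' \<notin> F \<and> p \<subseteq> q' \<longrightarrow> q' = p" using pF unfolding F_star_def by blast
  then have "q = p" using q pJ by blast
  then show False using dJ q d by blast
qed

lemma J_mem:
  fixes R :: "'a ring"
  shows "r \<in> set_add R p (PIdl\<^bsub>R\<^esub> d) \<Longrightarrow> \<exists>q\<in>p. \<exists>s\<in>carrier R. r = q \<oplus>\<^bsub>R\<^esub> s \<otimes>\<^bsub>R\<^esub> d"
  unfolding set_add_def' cgenideal_def by blast

lemma J_smult:
  fixes R :: "'a ring" and N :: "('a,'b) module"
  assumes N: "module R N" and p: "ideal p R"
    and pN: "\<forall>q\<in>p. \<forall>x\<in>carrier N. q \<odot>\<^bsub>N\<^esub> x = \<zero>\<^bsub>N\<^esub>"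
    and d: "d \<in> carrier R" and r: "r \<in> set_add R p (PIdl\<^bsub>R\<^esub> d)" and x: "x \<in> carrier N"
  shows "\<exists>s\<in>carrier R. r \<odot>\<^bsub>N\<^esub> x = d \<odot>\<^bsub>N\<^esub> (s \<odot>\<^bsub>N\<^esub> x)"
proof -
  interpret module R N by fact
  interpret p: ideal p R by fact
  obtain q s where q: "q \<in> p" and s: "s \<in> carrier R" and rr: "r = q \<oplus>\<^bsub>R\<^esub> s \<otimes>\<^bsub>R\<^esub> d"
    using J_mem[OF r] by blast
  have qc: "q \<in> carrier R" using q p.Icarr by blast
  have "r \<odot>\<^bsub>N\<^esub> x = q \<odot>\<^bsub>N\<^esub> x \<oplus>\<^bsub>N\<^esub> (s \<otimes>\<^bsub>R\<^esub> d) \<odot>\<^bsub>N\<^esub> x"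
    using rr qc s d x smult_l_distr[of q "s \<otimes>\<^bsub>R\<^esub> d" x] by simp
  also have "\<dots> = (d \<otimes>\<^bsub>R\<^esub> s) \<odot>\<^bsub>N\<^esub> x" using pN q x s d R.m_comm[OF s d] by simp
  also have "\<dots> = d \<odot>\<^bsub>N\<^esub> (s \<odot>\<^bsub>N\<^esub> x)" using s d x smult_assoc1 by simp
  finally show ?thesis using s by blast
qed

lemma J_smult2:
  fixes R :: "'a ring" and N :: "('a,'b) module"
  assumes N: "module R N" and p: "ideal p R"
    and pN: "\<forall>q\<in>p. \<forall>x\<in>carrier N. q \<odot>\<^bsub>N\<^esub> x = \<zero>\<^bsub>N\<^esub>"
    and d: "d \<in> carrier R" and r: "r \<in> set_add R p (PIdl\<^bsub>R\<^esub> d)" and x: "x \<in> carrier N"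
  shows "\<exists>s\<in>carrier R. r \<odot>\<^bsub>N\<^esub> x = s \<odot>\<^bsub>N\<^esub> (d \<odot>\<^bsub>N\<^esub> x)"
proof -
  interpret module R N by fact
  obtain s where s: "s \<in> carrier R" and e: "r \<odot>\<^bsub>N\<^esub> x = d \<odot>\<^bsub>N\<^esub> (s \<odot>\<^bsub>N\<^esub> x)"
    using J_smult[OF assms] by blast
  have "d \<odot>\<^bsub>N\<^esub> (s \<odot>\<^bsub>N\<^esub> x) = (d \<otimes>\<^bsub>R\<^esub> s) \<odot>\<^bsub>N\<^esub> x" using s d x smult_assoc1 by simp
  also have "\<dots> = (s \<otimes>\<^bsub>R\<^esub> d) \<odot>\<^bsub>N\<^esub> x" using R.m_comm[OF d s] by simp
  also have "\<dots> = s \<odot>\<^bsub>N\<^esub> (d \<odot>\<^bsub>N\<^esub> x)" using s d x smult_assoc1 by simp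
  finally show ?thesis using e s by auto
qed

lemma sub_facts:
  assumes "submodule U R N"
  shows "U \<subseteq> carrier N" "\<zero>\<^bsub>N\<^esub> \<in> U"
    "\<And>y z. y \<in> U \<Longrightarrow> z \<in> U \<Longrightarrow> y \<oplus>\<^bsub>N\<^esub> z \<in> U"
    "\<And>a x. a \<in> carrier R \<Longrightarrow> x \<in> U \<Longrightarrow> a \<odot>\<^bsub>N\<^esub> x \<in> U"
proof -
  have sg: "subgroup U (add_monoid N)" using assms by (rule submodule.axioms(1))
  show "U \<subseteq> carrier N" using subgroup.subset[OF sg] by simp
  show "\<zero>\<^bsub>N\<^esub> \<in> U" using subgroup.one_closed[OF sg] by simp
  show "\<And>y z. y \<in> U \<Longrightarrow> z \<in> U \<Longrightarrow> y \<oplus>\<^bsub>N\<^esub> z \<in> U" using subgroup.m_closed[OF sg] by simp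
  show "\<And>a x. a \<in> carrier R \<Longrightarrow> x \<in> U \<Longrightarrow> a \<odot>\<^bsub>N\<^esub> x \<in> U" using assms by (rule submodule.smult_closed)
qed

lemma TF_equiv:
  fixes R :: "'a ring" and N :: "('a,'b) module"
  assumes N: "module R N" and noeth: "noetherian_ring R" and gab: "gabriel_topology R F"
    and pF: "p \<in> F_star R F"
    and pN: "\<forall>q\<in>p. \<forall>x\<in>carrier N. q \<odot>\<^bsub>N\<^esub> x = \<zero>\<^bsub>N\<^esub>"
    and U: "submodule U R N"
  shows "quot_F_torsion_free F N U \<longleftrightarrow> (\<forall>d\<in>carrier R - p. \<forall>x\<in>carrier N. d \<odot>\<^bsub>N\<^esub> x \<in> U \<longrightarrow> x \<in> U)"
proof
  have cr: "cring R" using N by (rule module.axioms(1))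
  have pi: "ideal p R" using pF unfolding F_star_def by (auto dest: primeideal.axioms(1))
  assume H: "quot_F_torsion_free F N U"
  show "\<forall>d\<in>carrier R - p. \<forall>x\<in>carrier N. d \<odot>\<^bsub>N\<^esub> x \<in> U \<longrightarrow> x \<in> U"
  proof (intro ballI impI)
    fix d x assume d: "d \<in> carrier R - p" and x: "x \<in> carrier N" and dx: "d \<odot>\<^bsub>N\<^esub> x \<in> U"
    have JF: "set_add R p (PIdl\<^bsub>R\<^esub> d) \<in> F" using Fstar_K2[OF cr noeth gab pF] d by blast
    have "\<forall>r\<in>set_add R p (PIdl\<^bsub>R\<^esub> d). r \<odot>\<^bsub>N\<^esub> x \<in> U"
    proof
      fix r assume r: "r \<in> set_add R p (PIdl\<^bsub>R\<^esub> d)"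
      obtain s where s: "s \<in> carrier R" and e: "r \<odot>\<^bsub>N\<^esub> x = s \<odot>\<^bsub>N\<^esub> (d \<odot>\<^bsub>N\<^esub> x)"
        using J_smult2[OF N pi pN _ r x] d by blast
      show "r \<odot>\<^bsub>N\<^esub> x \<in> U" unfolding e using sub_facts(4)[OF U s dx] .
    qed
    then show "x \<in> U" using H JF x unfolding quot_F_torsion_free_def by blast
  qed
next
  assume H: "\<forall>d\<in>carrier R - p. \<forall>x\<in>carrier N. d \<odot>\<^bsub>N\<^esub> x \<in> U \<longrightarrow> x \<in> U"
  show "quot_F_torsion_free F N U" unfolding quot_F_torsion_free_def
  proof (intro ballI impI)
    fix a x assume a: "a \<in> F" and x: "x \<in> carrier N" and ax: "\<forall>r\<in>a. r \<odot>\<^bsub>N\<^esub> x \<in> U"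
    obtain d where d: "d \<in> a" "d \<notin> p" using Fstar_K1[OF gab pF a] by blast
    have "ideal a R" using gab a unfolding gabriel_topology_def by blast
    then have "d \<in> carrier R" using d(1) by (rule ideal.Icarr)
    then show "x \<in> U" using H d ax x by blast
  qed
qed

lemma DIV_equiv:
  fixes R :: "'a ring" and N :: "('a,'b) module"
  assumes N: "module R N" and noeth: "noetherian_ring R" and gab: "gabriel_topology R F"
    and pF: "p \<in> F_star R F"
    and pN: "\<forall>q\<in>p. \<forall>x\<in>carrier N. q \<odot>\<^bsub>N\<^esub> x = \<zero>\<^bsub>N\<^esub>"
    and V: "submodule V R N"
  shows "F_divisible F N V \<longleftrightarrow> (\<forall>d\<in>carrier R - p. (\<lambda>x. d \<odot>\<^bsub>N\<^esub> x) ` V = V)"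
proof
  interpret module R N by fact
  have cr: "cring R" using N by (rule module.axioms(1))
  have pi: "ideal p R" using pF unfolding F_star_def by (auto dest: primeideal.axioms(1))
  have Vc: "V \<subseteq> carrier N" by (rule sub_facts(1)[OF V])
  assume H: "F_divisible F N V"
  show "\<forall>d\<in>carrier R - p. (\<lambda>x. d \<odot>\<^bsub>N\<^esub> x) ` V = V"
  proof
    fix d assume d: "d \<in> carrier R - p"
    have JF: "set_add R p (PIdl\<^bsub>R\<^esub> d) \<in> F" using Fstar_K2[OF cr noeth gab pF] d by blast
    then have eq: "ideal_times N (set_add R p (PIdl\<^bsub>R\<^esub> d)) V = V" using H unfolding F_divisible_def by blast
    have sub: "(\<lambda>x. d \<odot>\<^bsub>N\<^esub> x) ` V \<subseteq> V" using sub_facts(4)[OF V] d by blast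
    have "ideal_times N (set_add R p (PIdl\<^bsub>R\<^esub> d)) V \<subseteq> (\<lambda>x. d \<odot>\<^bsub>N\<^esub> x) ` V"
    proof (rule ideal_times_least)
      have "d \<odot>\<^bsub>N\<^esub> \<zero>\<^bsub>N\<^esub> = \<zero>\<^bsub>N\<^esub>" using d by simp
      then show "\<zero>\<^bsub>N\<^esub> \<in> (\<lambda>x. d \<odot>\<^bsub>N\<^esub> x) ` V" using sub_facts(2)[OF V] by force
    next
      fix r x assume r: "r \<in> set_add R p (PIdl\<^bsub>R\<^esub> d)" and x: "x \<in> V"
      obtain s where s: "s \<in> carrier R" and e: "r \<odot>\<^bsub>N\<^esub> x = d \<odot>\<^bsub>N\<^esub> (s \<odot>\<^bsub>N\<^esub> x)"
        using J_smult[OF N pi pN _ r] d x Vc by blast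
      have "s \<odot>\<^bsub>N\<^esub> x \<in> V" using sub_facts(4)[OF V s x] .
      then show "r \<odot>\<^bsub>N\<^esub> x \<in> (\<lambda>x. d \<odot>\<^bsub>N\<^esub> x) ` V" unfolding e by blast
    next
      fix y z assume "y \<in> (\<lambda>x. d \<odot>\<^bsub>N\<^esub> x) ` V" "z \<in> (\<lambda>x. d \<odot>\<^bsub>N\<^esub> x) ` V"
      then obtain v w where v: "v \<in> V" "y = d \<odot>\<^bsub>N\<^esub> v" and w: "w \<in> V" "z = d \<odot>\<^bsub>N\<^esub> w" by blast
      have "y \<oplus>\<^bsub>N\<^esub> z = d \<odot>\<^bsub>N\<^esub> (v \<oplus>\<^bsub>N\<^esub> w)"
      proof -
        have "v \<in> carrier N" "w \<in> carrier N" using Vc v(1) w(1) by auto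
        moreover have "d \<in> carrier R" using d by blast
        ultimately have e: "d \<odot>\<^bsub>N\<^esub> (v \<oplus>\<^bsub>N\<^esub> w) = d \<odot>\<^bsub>N\<^esub> v \<oplus>\<^bsub>N\<^esub> d \<odot>\<^bsub>N\<^esub> w"
          using smult_r_distr[of d v w] by blast
        show ?thesis using e v(2) w(2) by (simp only:)
      qed
      moreover have "v \<oplus>\<^bsub>N\<^esub> w \<in> V" using sub_facts(3)[OF V v(1) w(1)] .
      ultimately show "y \<oplus>\<^bsub>N\<^esub> z \<in> (\<lambda>x. d \<odot>\<^bsub>N\<^esub> x) ` V" by blast
    qed
    then show "(\<lambda>x. d \<odot>\<^bsub>N\<^esub> x) ` V = V" using sub eq by blast
  qed
next
  assume H: "\<forall>d\<in>carrier R - p. (\<lambda>x. d \<odot>\<^bsub>N\<^esub> x) ` V = V"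
  show "F_divisible F N V" unfolding F_divisible_def
  proof
    fix a assume a: "a \<in> F"
    obtain d where d: "d \<in> a" "d \<notin> p" using Fstar_K1[OF gab pF a] by blast
    have ai: "ideal a R" using gab a unfolding gabriel_topology_def by blast
    then have dc: "d \<in> carrier R" using d(1) by (rule ideal.Icarr)
    have "ideal_times N a V \<subseteq> V"
    proof (rule ideal_times_least)
      show "\<zero>\<^bsub>N\<^esub> \<in> V" by (rule sub_facts(2)[OF V])
      show "\<And>y z. y \<in> V \<Longrightarrow> z \<in> V \<Longrightarrow> y \<oplus>\<^bsub>N\<^esub> z \<in> V" by (rule sub_facts(3)[OF V])
      fix r x assume "r \<in> a" "x \<in> V"
      then show "r \<odot>\<^bsub>N\<^esub> x \<in> V" using sub_facts(4)[OF V] ideal.Icarr[OF ai] by blast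
    qed
    moreover have "V \<subseteq> ideal_times N a V"
    proof
      fix v assume "v \<in> V"
      moreover have "(\<lambda>x. d \<odot>\<^bsub>N\<^esub> x) ` V = V" using H dc d(2) by blast
      ultimately have "v \<in> (\<lambda>x. d \<odot>\<^bsub>N\<^esub> x) ` V" by (simp only:)
      then obtain w where "w \<in> V" "v = d \<odot>\<^bsub>N\<^esub> w" by blast
      then show "v \<in> ideal_times N a V" using ideal_times_mem[OF d(1), of w V N] by simp
    qed
    ultimately show "ideal_times N a V = V" by blast
  qed
qed



lemma Q_fields:
  "carrier (quot_module N) = carrier N" "\<zero>\<^bsub>quot_module N\<^esub> = \<zero>\<^bsub>N\<^esub>"
  "add (quot_module N) = add N"
  unfolding quot_module_def by simp_all

lemma Q_subgroup:
  "subgroup U (add_monoid (quot_module N)) \<longleftrightarrow> subgroup U (add_monoid N)"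
  unfolding subgroup_def m_inv_def by (simp add: Q_fields)

lemma Q_submodule:
  fixes R :: "'a ring" and N :: "('a,'b) module"
  assumes N: "module R N" and p: "ideal p R"
    and pN: "\<forall>q\<in>p. \<forall>x\<in>carrier N. q \<odot>\<^bsub>N\<^esub> x = \<zero>\<^bsub>N\<^esub>"
  shows "submodule U (R Quot p) (quot_module N) \<longleftrightarrow> submodule U R N"
proof -
  interpret module R N by fact
  interpret p: ideal p R by fact
  have c: "carrier (R Quot p) = a_rcosets\<^bsub>R\<^esub> p" by (simp add: FactRing_def)
  have sm: "(\<forall>W\<in>carrier (R Quot p). \<forall>x\<in>U. W \<odot>\<^bsub>quot_module N\<^esub> x \<in> U) \<longleftrightarrow>
            (\<forall>a\<in>carrier R. \<forall>x\<in>U. a \<odot>\<^bsub>N\<^esub> x \<in> U)" if Uc: "U \<subseteq> carrier N"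
  proof
    assume H: "\<forall>W\<in>carrier (R Quot p). \<forall>x\<in>U. W \<odot>\<^bsub>quot_module N\<^esub> x \<in> U"
    show "\<forall>a\<in>carrier R. \<forall>x\<in>U. a \<odot>\<^bsub>N\<^esub> x \<in> U"
    proof (intro ballI)
      fix a x assume a: "a \<in> carrier R" and x: "x \<in> U"
      have "p +>\<^bsub>R\<^esub> a \<in> carrier (R Quot p)" unfolding c using a p.Icarr
        by (intro R.a_rcosetsI) auto
      then have "(p +>\<^bsub>R\<^esub> a) \<odot>\<^bsub>quot_module N\<^esub> x \<in> U" using H x by blast
      moreover have "(p +>\<^bsub>R\<^esub> a) \<odot>\<^bsub>quot_module N\<^esub> x = a \<odot>\<^bsub>N\<^esub> x"
        using Q_smult[OF N p pN a] x Uc by blast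
      ultimately show "a \<odot>\<^bsub>N\<^esub> x \<in> U" by (simp only:)
    qed
  next
    assume H: "\<forall>a\<in>carrier R. \<forall>x\<in>U. a \<odot>\<^bsub>N\<^esub> x \<in> U"
    show "\<forall>W\<in>carrier (R Quot p). \<forall>x\<in>U. W \<odot>\<^bsub>quot_module N\<^esub> x \<in> U"
    proof (intro ballI)
      fix W x assume W: "W \<in> carrier (R Quot p)" and x: "x \<in> U"
      then obtain a where a: "a \<in> carrier R" "W = p +>\<^bsub>R\<^esub> a"
        unfolding c A_RCOSETS_def' by blast
      have "W \<odot>\<^bsub>quot_module N\<^esub> x = a \<odot>\<^bsub>N\<^esub> x"
        unfolding a(2) using Q_smult[OF N p pN a(1)] x Uc by blast
      then show "W \<odot>\<^bsub>quot_module N\<^esub> x \<in> U" using H a x by simp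
    qed
  qed
  show ?thesis
  proof
    assume S: "submodule U (R Quot p) (quot_module N)"
    have sg: "subgroup U (add_monoid N)" using submodule.axioms(1)[OF S] Q_subgroup by blast
    have Uc: "U \<subseteq> carrier N" using subgroup.subset[OF sg] by simp
    have "\<forall>W\<in>carrier (R Quot p). \<forall>x\<in>U. W \<odot>\<^bsub>quot_module N\<^esub> x \<in> U"
      using submodule.smult_closed[OF S] by blast
    then have "\<forall>a\<in>carrier R. \<forall>x\<in>U. a \<odot>\<^bsub>N\<^esub> x \<in> U" using sm[OF Uc] by blast
    then show "submodule U R N" using sg unfolding submodule_def submodule_axioms_def by blast
  next
    assume S: "submodule U R N"
    have sg: "subgroup U (add_monoid N)" using submodule.axioms(1)[OF S] .
    have Uc: "U \<subseteq> carrier N" using subgroup.subset[OF sg] by simp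
    have "\<forall>a\<in>carrier R. \<forall>x\<in>U. a \<odot>\<^bsub>N\<^esub> x \<in> U"
      using submodule.smult_closed[OF S] by blast
    then have "\<forall>W\<in>carrier (R Quot p). \<forall>x\<in>U. W \<odot>\<^bsub>quot_module N\<^esub> x \<in> U" using sm[OF Uc] by blast
    moreover have "subgroup U (add_monoid (quot_module N))" using sg Q_subgroup by blast
    ultimately show "submodule U (R Quot p) (quot_module N)"
      unfolding submodule_def submodule_axioms_def by blast
  qed
qed

lemma Q_qtf:
  fixes R :: "'a ring" and N :: "('a,'b) module"
  assumes N: "module R N" and p: "ideal p R"
    and pN: "\<forall>q\<in>p. \<forall>x\<in>carrier N. q \<odot>\<^bsub>N\<^esub> x = \<zero>\<^bsub>N\<^esub>"
  shows "quot_torsion_free (R Quot p) (quot_module N) U \<longleftrightarrow>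
     (\<forall>d\<in>carrier R - p. \<forall>x\<in>carrier N. d \<odot>\<^bsub>N\<^esub> x \<in> U \<longrightarrow> x \<in> U)"
proof -
  have cr: "cring R" using N by (rule module.axioms(1))
  have "quot_torsion_free (R Quot p) (quot_module N) U \<longleftrightarrow>
     (\<forall>d\<in>carrier R - p. \<forall>x\<in>carrier N. (p +>\<^bsub>R\<^esub> d) \<odot>\<^bsub>quot_module N\<^esub> x \<in> U \<longrightarrow> x \<in> U)"
    unfolding quot_torsion_free_def Q_fields
    by (rule Quot_nonzero[OF cr p, where P = "\<lambda>W. \<forall>x\<in>carrier N. W \<odot>\<^bsub>quot_module N\<^esub> x \<in> U \<longrightarrow> x \<in> U"])
  also have "\<dots> \<longleftrightarrow> (\<forall>d\<in>carrier R - p. \<forall>x\<in>carrier N. d \<odot>\<^bsub>N\<^esub> x \<in> U \<longrightarrow> x \<in> U)"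
    using Q_smult[OF N p pN] by auto
  finally show ?thesis .
qed

lemma Q_tf:
  fixes R :: "'a ring" and N :: "('a,'b) module"
  assumes N: "module R N" and p: "ideal p R"
    and pN: "\<forall>q\<in>p. \<forall>x\<in>carrier N. q \<odot>\<^bsub>N\<^esub> x = \<zero>\<^bsub>N\<^esub>"
  shows "torsion_free (R Quot p) (quot_module N) \<longleftrightarrow>
     (\<forall>d\<in>carrier R - p. \<forall>x\<in>carrier N. d \<odot>\<^bsub>N\<^esub> x \<in> {\<zero>\<^bsub>N\<^esub>} \<longrightarrow> x \<in> {\<zero>\<^bsub>N\<^esub>})"
proof -
  have "torsion_free (R Quot p) (quot_module N) \<longleftrightarrow> quot_torsion_free (R Quot p) (quot_module N) {\<zero>\<^bsub>N\<^esub>}"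
    unfolding torsion_free_def quot_torsion_free_def Q_fields by simp
  then show ?thesis using Q_qtf[OF N p pN] by simp
qed

lemma Q_div:
  fixes R :: "'a ring" and N :: "('a,'b) module"
  assumes N: "module R N" and p: "ideal p R"
    and pN: "\<forall>q\<in>p. \<forall>x\<in>carrier N. q \<odot>\<^bsub>N\<^esub> x = \<zero>\<^bsub>N\<^esub>"
    and Vc: "V \<subseteq> carrier N"
  shows "divisible (R Quot p) (quot_module N) V \<longleftrightarrow>
     (\<forall>d\<in>carrier R - p. (\<lambda>x. d \<odot>\<^bsub>N\<^esub> x) ` V = V)"
proof -
  have cr: "cring R" using N by (rule module.axioms(1))
  have "divisible (R Quot p) (quot_module N) V \<longleftrightarrow>
     (\<forall>d\<in>carrier R - p. (\<lambda>x. (p +>\<^bsub>R\<^esub> d) \<odot>\<^bsub>quot_module N\<^esub> x) ` V = V)"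
    unfolding divisible_def
    by (rule Quot_nonzero[OF cr p, where P = "\<lambda>W. (\<lambda>x. W \<odot>\<^bsub>quot_module N\<^esub> x) ` V = V"])
  also have "\<dots> \<longleftrightarrow> (\<forall>d\<in>carrier R - p. (\<lambda>x. d \<odot>\<^bsub>N\<^esub> x) ` V = V)"
  proof -
    have "\<And>d. d \<in> carrier R - p \<Longrightarrow> (\<lambda>x. (p +>\<^bsub>R\<^esub> d) \<odot>\<^bsub>quot_module N\<^esub> x) ` V = (\<lambda>x. d \<odot>\<^bsub>N\<^esub> x) ` V"
      using Q_smult[OF N p pN] Vc by (intro image_cong) auto
    then show ?thesis by auto
  qed
  finally show ?thesis .
qed

lemma F_tf_zero:
  fixes R :: "'a ring" and N :: "('a,'b) module"
  assumes N: "module R N" and gab: "gabriel_topology R F"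
  shows "F_torsion_free F N \<longleftrightarrow> quot_F_torsion_free F N {\<zero>\<^bsub>N\<^esub>}"
proof -
  have eq: "ann_part N a (carrier N) = {\<zero>\<^bsub>N\<^esub>} \<longleftrightarrow>
      (\<forall>x\<in>carrier N. (\<forall>r\<in>a. r \<odot>\<^bsub>N\<^esub> x \<in> {\<zero>\<^bsub>N\<^esub>}) \<longrightarrow> x \<in> {\<zero>\<^bsub>N\<^esub>})" if a: "a \<in> F" for a
  proof -
    have "\<forall>a\<in>F. ideal a R" using gab unfolding gabriel_topology_def by (elim conjE)
    then have ai: "ideal a R" using a by blast
    have ac: "\<And>r. r \<in> a \<Longrightarrow> r \<in> carrier R" by (rule ideal.Icarr[OF ai])
    have z: "\<zero>\<^bsub>N\<^esub> \<in> carrier N" by (rule abelian_monoid.zero_closed[OF abelian_group.axioms(1)[OF module.axioms(2)[OF N]]])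
    have "\<And>r. r \<in> a \<Longrightarrow> r \<odot>\<^bsub>N\<^esub> \<zero>\<^bsub>N\<^esub> = \<zero>\<^bsub>N\<^esub>" using module.smult_r_null[OF N] ac by blast
    then have z2: "\<zero>\<^bsub>N\<^esub> \<in> ann_part N a (carrier N)" unfolding ann_part_def using z by blast
    show ?thesis
    proof
      assume H: "ann_part N a (carrier N) = {\<zero>\<^bsub>N\<^esub>}"
      show "\<forall>x\<in>carrier N. (\<forall>r\<in>a. r \<odot>\<^bsub>N\<^esub> x \<in> {\<zero>\<^bsub>N\<^esub>}) \<longrightarrow> x \<in> {\<zero>\<^bsub>N\<^esub>}"
      proof (intro ballI impI)
        fix x assume "x \<in> carrier N" "\<forall>r\<in>a. r \<odot>\<^bsub>N\<^esub> x \<in> {\<zero>\<^bsub>N\<^esub>}"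
        then have "x \<in> ann_part N a (carrier N)" unfolding ann_part_def by blast
        then show "x \<in> {\<zero>\<^bsub>N\<^esub>}" using H by (simp only:)
      qed
    next
      assume H: "\<forall>x\<in>carrier N. (\<forall>r\<in>a. r \<odot>\<^bsub>N\<^esub> x \<in> {\<zero>\<^bsub>N\<^esub>}) \<longrightarrow> x \<in> {\<zero>\<^bsub>N\<^esub>}"
      have "ann_part N a (carrier N) \<subseteq> {\<zero>\<^bsub>N\<^esub>}"
      proof
        fix x assume "x \<in> ann_part N a (carrier N)"
        then have "x \<in> carrier N" "\<forall>r\<in>a. r \<odot>\<^bsub>N\<^esub> x \<in> {\<zero>\<^bsub>N\<^esub>}" unfolding ann_part_def by auto
        then show "x \<in> {\<zero>\<^bsub>N\<^esub>}" using H by blast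
      qed
      then show "ann_part N a (carrier N) = {\<zero>\<^bsub>N\<^esub>}" using z2 by blast
    qed
  qed
  show ?thesis unfolding F_torsion_free_def quot_F_torsion_free_def
  proof
    assume "\<forall>a\<in>F. ann_part N a (carrier N) = {\<zero>\<^bsub>N\<^esub>}"
    then show "\<forall>a\<in>F. \<forall>x\<in>carrier N. (\<forall>r\<in>a. r \<odot>\<^bsub>N\<^esub> x \<in> {\<zero>\<^bsub>N\<^esub>}) \<longrightarrow> x \<in> {\<zero>\<^bsub>N\<^esub>}"
      using eq by (simp only: Ball_def) (metis)
  next
    assume "\<forall>a\<in>F. \<forall>x\<in>carrier N. (\<forall>r\<in>a. r \<odot>\<^bsub>N\<^esub> x \<in> {\<zero>\<^bsub>N\<^esub>}) \<longrightarrow> x \<in> {\<zero>\<^bsub>N\<^esub>}"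
    then show "\<forall>a\<in>F. ann_part N a (carrier N) = {\<zero>\<^bsub>N\<^esub>}"
      using eq by (simp only: Ball_def) (metis)
  qed
qed

lemma zero_submodule:
  assumes N: "module R N"
  shows "submodule {\<zero>\<^bsub>N\<^esub>} R N"
proof -
  interpret module R N by fact
  show ?thesis by (rule submoduleI) auto
qed



theorem corollary1p3:
  fixes R :: "'a ring" and F :: "'a set set" and p :: "'a set"
    and N :: "('a, 'b) module"
  assumes "noetherian_ring R" and "local_ring R"
    and "gabriel_topology R F"
    and "p \<in> F_star R F"
    and "module R N"
    and "ideal_times N p (carrier N) = {\<zero>\<^bsub>N\<^esub>}"
  shows "(simple_F_torsion_free R F N \<longleftrightarrow> simple_torsion_free (R Quot p) (quot_module N))
       \<and> (simple_F_divisible R F N \<longleftrightarrow> simple_divisible (R Quot p) (quot_module N))"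
proof -
  note noeth = assms(1) and gab = assms(3) and pF = assms(4) and N = assms(5)
  have pi: "ideal p R" using pF unfolding F_star_def by (auto dest: primeideal.axioms(1))
  have pN: "\<forall>q\<in>p. \<forall>x\<in>carrier N. q \<odot>\<^bsub>N\<^esub> x = \<zero>\<^bsub>N\<^esub>" using pN_of[OF assms(6)] .
  have zs: "submodule {\<zero>\<^bsub>N\<^esub>} R N" by (rule zero_submodule[OF N])
  have cs: "submodule (carrier N) R N" by (rule module.carrier_is_submodule[OF N])
  have subeq: "\<And>U. submodule U (R Quot p) (quot_module N) \<longleftrightarrow> submodule U R N"
    by (rule Q_submodule[OF N pi pN])
  have qtf: "quot_F_torsion_free F N U \<longleftrightarrow> quot_torsion_free (R Quot p) (quot_module N) U"
    if U: "submodule U R N" for U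
  proof -
    have "quot_F_torsion_free F N U \<longleftrightarrow> (\<forall>d\<in>carrier R - p. \<forall>x\<in>carrier N. d \<odot>\<^bsub>N\<^esub> x \<in> U \<longrightarrow> x \<in> U)"
      by (rule TF_equiv[OF N noeth gab pF pN U])
    also have "\<dots> \<longleftrightarrow> quot_torsion_free (R Quot p) (quot_module N) U"
      by (rule Q_qtf[OF N pi pN, symmetric])
    finally show ?thesis .
  qed
  have tf: "F_torsion_free F N \<longleftrightarrow> torsion_free (R Quot p) (quot_module N)"
  proof -
    have "F_torsion_free F N \<longleftrightarrow> quot_F_torsion_free F N {\<zero>\<^bsub>N\<^esub>}" by (rule F_tf_zero[OF N gab])
    also have "\<dots> \<longleftrightarrow> (\<forall>d\<in>carrier R - p. \<forall>x\<in>carrier N. d \<odot>\<^bsub>N\<^esub> x \<in> {\<zero>\<^bsub>N\<^esub>} \<longrightarrow> x \<in> {\<zero>\<^bsub>N\<^esub>})"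
      by (rule TF_equiv[OF N noeth gab pF pN zs])
    also have "\<dots> \<longleftrightarrow> torsion_free (R Quot p) (quot_module N)"
      by (rule Q_tf[OF N pi pN, symmetric])
    finally show ?thesis .
  qed
  have dv: "F_divisible F N V \<longleftrightarrow> divisible (R Quot p) (quot_module N) V"
    if V: "submodule V R N" for V
  proof -
    have Vc: "V \<subseteq> carrier N" by (rule sub_facts(1)[OF V])
    have "F_divisible F N V \<longleftrightarrow> (\<forall>d\<in>carrier R - p. (\<lambda>x. d \<odot>\<^bsub>N\<^esub> x) ` V = V)"
      by (rule DIV_equiv[OF N noeth gab pF pN V])
    also have "\<dots> \<longleftrightarrow> divisible (R Quot p) (quot_module N) V"
      by (rule Q_div[OF N pi pN Vc, symmetric])
    finally show ?thesis .
  qed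
  have c1: "(\<forall>U. submodule U R N \<and> U \<noteq> {\<zero>\<^bsub>N\<^esub>} \<and> U \<subset> carrier N \<longrightarrow> \<not> quot_F_torsion_free F N U)
      \<longleftrightarrow> (\<forall>U. submodule U R N \<and> U \<noteq> {\<zero>\<^bsub>N\<^esub>} \<and> U \<subset> carrier N \<longrightarrow> \<not> quot_torsion_free (R Quot p) (quot_module N) U)"
    using qtf by (intro all_cong) blast
  have c2: "(\<forall>V. submodule V R N \<and> V \<noteq> {\<zero>\<^bsub>N\<^esub>} \<and> V \<subset> carrier N \<longrightarrow> \<not> F_divisible F N V)
      \<longleftrightarrow> (\<forall>V. submodule V R N \<and> V \<noteq> {\<zero>\<^bsub>N\<^esub>} \<and> V \<subset> carrier N \<longrightarrow> \<not> divisible (R Quot p) (quot_module N) V)"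
    using dv by (intro all_cong) blast
  have part1: "simple_F_torsion_free R F N \<longleftrightarrow> simple_torsion_free (R Quot p) (quot_module N)"
    unfolding simple_F_torsion_free_def simple_torsion_free_def Q_fields subeq
    using tf c1 by (simp only:)
  have part2: "simple_F_divisible R F N \<longleftrightarrow> simple_divisible (R Quot p) (quot_module N)"
    unfolding simple_F_divisible_def simple_divisible_def Q_fields subeq
    using dv[OF cs] c2 by (simp only:)
  show ?thesis using part1 part2 by blast
qed


end
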